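(* For all $\Sigma\in\mathcal{P}(\mathit{State})$, $$\alpha^{\mathsf{v}}(\Sigma)=\bigsqcup\big\{\langle\{\langle\ell,\langle s,h|_{\mathrm{rng}(s)}\rangle\rangle\},\; h|_{\mathit{Addr}\setminus\mathrm{rng}(s)}\rangle \;\big|\; \langle\ell,\langle s,h\rangle\rangle\in\Sigma\big\},$$ where $h|_X$ denotes the restriction of $h$ to $X$ (the second component viewed as a set of pairs $\langle a,h(a)\rangle$) and $\bigsqcup$ is the join in $\mathcal{A}^{\mathsf{v}}$. Moreover, $\alpha^{\mathsf{v}}(\top)=\top$.
   Context: Setting (heap programs): $\mathit{Var}=\mathit{Var}_p\uplus\mathit{Var}_d$ are pointer/data program variables, $\mathit{Fld}=\mathit{Fld}_p\uplus\mathit{Fld}_d$ pointer/data fields, $\mathit{Addr}$ a set of addresses containing $\mathsf{null}$, $\mathit{Val}=\mathit{Addr}\uplus\mathbb{Z}$, $\mathit{Loc}$ a finite set of control locations. A stack $s:\mathit{Var}\to\mathit{Val}$ is safe if $s(\mathit{Var}_p)\subseteq\mathit{Addr}$ and $s(\mathit{Var}_d)\subseteq\mathbb{Z}$. A heap is a partial map $h:\mathit{Addr}\rightharpoonup\mathit{FldVal}$ with $\mathit{FldVal}=(\mathit{Fld}\uplus\{\mathsf{free}\})\to\mathit{Val}$; it is safe if for all $a\in\mathrm{dom}(h)$, $h(a)(\mathit{Fld}_p)\subseteq\mathit{Addr}\cap\mathrm{dom}(h)$ and $h(a)(\mathit{Fld}_d\uplus\{\mathsf{free}\})\subseteq\mathbb{Z}$;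 $\mathit{Heap}$ is the set of safe heaps. A state is $\langle\ell,\langle s,h\rangle\rangle$ with $\ell\in\mathit{Loc}$, $s$ a safe stack, $h$ a safe heap and $\mathrm{rng}(s)\cap\mathit{Addr}\subseteq\mathrm{dom}(h)$; $\mathit{State}$ is the set of states. The concrete domain is $\mathcal{C}=\mathcal{P}(\mathit{State})\cup\{\top\}$ ordered by $X\sqsubseteq Y$ iff ($X,Y$ are sets and $X\subseteq Y$) or $Y=\top$. View abstraction: the view states are $\mathit{State}^{\mathsf{v}}=\mathit{Loc}\times\{\top\}\cup\{\langle\ell,\langle s,h\rangle\rangle \mid \mathrm{dom}(h)=s(\mathit{Var}_p)\}$ (the view heap $h$ may point outside its domain, so need not be safe). The abstract domain is $\mathcal{A}^{\mathsf{v}}=(\mathcal{P}(\mathit{State}^{\mathsf{v}})\times\mathcal{P}(\mathit{Addr}\times\mathit{FldVal}))\cup\{\top\}$, ordered by componentwise subset inclusion with $\top$ as top element; it is a complete lattice. For a view heap $h$ and $H\subseteq\mathit{Addr}\times\mathit{FldVal}$ (the space invariant), the completion $H\triangleright h$ is the set of safe heaps $h'$ with $h'=h\uplus h''$ for some $h''\in\mathit{Heap}$ whose graph is contained in $H$. The concretization is $\gamma^{\mathsf{v}}(\Sigma,H)=\{\langle\ell,\langle s,h'\rangle\rangle \mid \langle\ell,\langle s,h\rangle\rangle\in\Sigma \wedge h'\in H\triangleright h\}$ and $\gamma^{\mathsf{v}}(\top)=\top$. The abstraction $\alpha^{\mathsf{v}}:\mathcal{C}\to\mathcal{A}^{\mathsf{v}}$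 is defined as $\alpha^{\mathsf{v}}(\Sigma)=$ the greatest lower bound (meet) in $\mathcal{A}^{\mathsf{v}}$ of the set $\{V\in\mathcal{A}^{\mathsf{v}} \mid \Sigma\sqsubseteq\gamma^{\mathsf{v}}(V)\}$. *)

theory Defs
  imports Main
begin

datatype 'a val = VAddr 'a | VInt int

(* FldVal = (Fld \<uplus> {free}) \<Rightarrow> Val ; None encodes the extra field 'free' *)
type_synonym ('f,'a) fldval = "'f option \<Rightarrow> 'a val"
type_synonym ('f,'a) heap = "'a \<rightharpoonup> ('f,'a) fldval"
type_synonym ('v,'a) stack = "'v \<Rightarrow> 'a val"

type_synonym ('l,'v,'f,'a) cstate = "'l \<times> ('v,'a) stack \<times> ('f,'a) heap"
(* view state: None in the second component encodes <l, top> *)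
type_synonym ('l,'v,'f,'a) vstate = "'l \<times> (('v,'a) stack \<times> ('f,'a) heap) option"

(* Var_p = Vp, Var_d = - Vp ;  Fld_p = Fp, Fld_d = - Fp *)

definition is_addr :: "'a val \<Rightarrow> bool" where
  "is_addr v \<longleftrightarrow> (\<exists>a. v = VAddr a)"

definition is_int :: "'a val \<Rightarrow> bool" where
  "is_int v \<longleftrightarrow> (\<exists>i. v = VInt i)"

definition addr_rng :: "('v,'a) stack \<Rightarrow> 'a set" where
  "addr_rng s = {a. VAddr a \<in> range s}"

definition safe_stack :: "'v set \<Rightarrow> ('v,'a) stack \<Rightarrow> bool" where
  "safe_stack Vp s \<longleftrightarrow> (\<forall>x. (x \<in> Vp \<longrightarrow> is_addr (s x)) \<and> (x \<notin> Vp \<longrightarrow> is_int (s x)))"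

definition safe_heap :: "'f set \<Rightarrow> ('f,'a) heap \<Rightarrow> bool" where
  "safe_heap Fp h \<longleftrightarrow> (\<forall>a \<in> dom h. \<forall>c. h a = Some c \<longrightarrow>
      (\<forall>f \<in> Fp. \<exists>b \<in> dom h. c (Some f) = VAddr b) \<and>
      (\<forall>f. f \<notin> Fp \<longrightarrow> is_int (c (Some f))) \<and> is_int (c None))"

definition States :: "'v set \<Rightarrow> 'f set \<Rightarrow> ('l,'v,'f,'a) cstate set" where
  "States Vp Fp = {(l, s, h). safe_stack Vp s \<and> safe_heap Fp h \<and> addr_rng s \<subseteq> dom h}"

definition ptr_img :: "'v set \<Rightarrow> ('v,'a) stack \<Rightarrow> 'a set" where
  "ptr_img Vp s = {a. VAddr a \<in> s ` Vp}"

definition VStates :: "'v set \<Rightarrow> ('l,'v,'f,'a) vstate set" where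
  "VStates Vp = {(l, None) | l. True} \<union>
     {(l, Some (s, h)) | l s h. safe_stack Vp s \<and> dom h = ptr_img Vp s}"

(* Concrete domain C = P(State) \<union> {top};  None encodes top *)
definition c_le :: "('l,'v,'f,'a) cstate set option \<Rightarrow> ('l,'v,'f,'a) cstate set option \<Rightarrow> bool" where
  "c_le X Y \<longleftrightarrow> (case Y of None \<Rightarrow> True
                   | Some B \<Rightarrow> (case X of None \<Rightarrow> False | Some A \<Rightarrow> A \<subseteq> B))"

definition CDom :: "'v set \<Rightarrow> 'f set \<Rightarrow> ('l,'v,'f,'a) cstate set option set" where
  "CDom Vp Fp = {None} \<union> Some ` Pow (States Vp Fp)"

(* Abstract domain A^v; None encodes top *)
type_synonym ('l,'v,'f,'a) aval = "(('l,'v,'f,'a) vstate set \<times> ('a \<times> ('f,'a) fldval) set) option"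

definition AvDom :: "'v set \<Rightarrow> ('l,'v,'f,'a) aval set" where
  "AvDom Vp = {None} \<union> Some ` (Pow (VStates Vp) \<times> UNIV)"

definition av_le :: "('l,'v,'f,'a) aval \<Rightarrow> ('l,'v,'f,'a) aval \<Rightarrow> bool" where
  "av_le X Y \<longleftrightarrow> (case Y of None \<Rightarrow> True
                    | Some (S2, H2) \<Rightarrow> (case X of None \<Rightarrow> False
                                       | Some (S1, H1) \<Rightarrow> S1 \<subseteq> S2 \<and> H1 \<subseteq> H2))"

definition av_meet :: "'v set \<Rightarrow> ('l,'v,'f,'a) aval set \<Rightarrow> ('l,'v,'f,'a) aval" where
  "av_meet Vp K = (THE V. V \<in> AvDom Vp \<and> (\<forall>W \<in> K. av_le V W) \<and>
      (\<forall>U \<in> AvDom Vp. (\<forall>W \<in> K. av_le U W) \<longrightarrow> av_le U V))"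

definition av_join :: "'v set \<Rightarrow> ('l,'v,'f,'a) aval set \<Rightarrow> ('l,'v,'f,'a) aval" where
  "av_join Vp K = (THE V. V \<in> AvDom Vp \<and> (\<forall>W \<in> K. av_le W V) \<and>
      (\<forall>U \<in> AvDom Vp. (\<forall>W \<in> K. av_le W U) \<longrightarrow> av_le V U))"

definition completion :: "'f set \<Rightarrow> ('a \<times> ('f,'a) fldval) set \<Rightarrow> ('f,'a) heap \<Rightarrow> ('f,'a) heap set" where
  "completion Fp H h = {h'. safe_heap Fp h' \<and>
      (\<exists>h''. dom h \<inter> dom h'' = {} \<and> h' = h ++ h'' \<and> Map.graph h'' \<subseteq> H)}"

definition gamma_v :: "'f set \<Rightarrow> ('l,'v,'f,'a) aval \<Rightarrow> ('l,'v,'f,'a) cstate set option" where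
  "gamma_v Fp V = (case V of None \<Rightarrow> None
     | Some (\<Sigma>, H) \<Rightarrow> Some {(l, s, h'). \<exists>h. (l, Some (s, h)) \<in> \<Sigma> \<and> h' \<in> completion Fp H h})"

definition alpha_v :: "'v set \<Rightarrow> 'f set \<Rightarrow> ('l,'v,'f,'a) cstate set option \<Rightarrow> ('l,'v,'f,'a) aval" where
  "alpha_v Vp Fp X = av_meet Vp {V \<in> AvDom Vp. c_le X (gamma_v Fp V)}"

end

theory Submission
  imports Defs
begin

lemma av_le_antisym: "av_le X Y \<Longrightarrow> av_le Y X \<Longrightarrow> X = Y"
  by (auto simp: av_le_def split: option.splits prod.splits)

lemma av_join_eqI:
  assumes "J \<in> AvDom Vp" "\<forall>W\<in>K. av_le W J"
    "\<forall>U\<in>AvDom Vp. (\<forall>W\<in>K. av_le W U) \<longrightarrow> av_le J U"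
  shows "av_join Vp K = J"
  unfolding av_join_def
  apply (rule the_equality)
  using assms apply blast
  using assms av_le_antisym by blast

lemma av_meet_eqI:
  assumes "J \<in> AvDom Vp" "\<forall>W\<in>K. av_le J W"
    "\<forall>U\<in>AvDom Vp. (\<forall>W\<in>K. av_le U W) \<longrightarrow> av_le U J"
  shows "av_meet Vp K = J"
  unfolding av_meet_def
  apply (rule the_equality)
  using assms apply blast
  using assms av_le_antisym by blast

lemma rng_eq: "safe_stack Vp s \<Longrightarrow> addr_rng s = ptr_img Vp s"
  unfolding addr_rng_def ptr_img_def safe_stack_def is_int_def
  by (force)

lemma restrict_split: "h = (h |` A) ++ (h |` (- A))"
  by (rule ext) (auto simp: restrict_map_def map_add_def split: option.splits)

lemma completion_inv:
  assumes "h \<in> completion Fp H h0"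
  shows "h0 = h |` dom h0 \<and> Map.graph (h |` (- dom h0)) \<subseteq> H"
proof -
  obtain h'' where d: "dom h0 \<inter> dom h'' = {}" and e: "h = h0 ++ h''" and g: "Map.graph h'' \<subseteq> H"
    using assms unfolding completion_def by blast
  have 1: "h0 = h |` dom h0"
    by (rule ext) (use d e in \<open>auto simp: restrict_map_def map_add_def split: option.splits\<close>)
  have 2: "h |` (- dom h0) = h''"
    by (rule ext) (use d e in \<open>auto simp: restrict_map_def map_add_def split: option.splits\<close>)
  show ?thesis using 1 2 g by simp
qed

theorem lemma4p2:
  fixes Vp :: "'v set" and Fp :: "'f set"
    and \<Sigma> :: "('l::finite, 'v, 'f, 'a) cstate set"
  assumes "\<Sigma> \<subseteq> States Vp Fp"
  shows "alpha_v Vp Fp (Some \<Sigma>) =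
           av_join Vp {Some ({(l, Some (s, h |` addr_rng s))}, Map.graph (h |` (- addr_rng s)))
                        | l s h. (l, s, h) \<in> \<Sigma>}
         \<and> alpha_v Vp Fp (None :: ('l, 'v, 'f, 'a) cstate set option) = None"
proof
  define S0 where "S0 = {(l, Some (s, h |` addr_rng s)) | l s h. (l, s, h) \<in> \<Sigma>}"
  define H0 where "H0 = \<Union>{Map.graph (h |` (- addr_rng s)) | l s h. (l, s, h) \<in> \<Sigma>}"
  define K where "K = {Some ({(l, Some (s, h |` addr_rng s))}, Map.graph (h |` (- addr_rng s)))
                        | l s h. (l, s, h) \<in> \<Sigma>}"
  have st: "safe_stack Vp s \<and> safe_heap Fp h \<and> addr_rng s \<subseteq> dom h
            \<and> addr_rng s = ptr_img Vp s" if "(l, s, h) \<in> \<Sigma>" for l s h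
    using assms that rng_eq unfolding States_def by blast
  have S0V: "S0 \<subseteq> VStates Vp"
  proof
    fix x assume "x \<in> S0"
    then obtain l s h where x: "x = (l, Some (s, h |` addr_rng s))" "(l, s, h) \<in> \<Sigma>"
      unfolding S0_def by blast
    have "dom (h |` addr_rng s) = ptr_img Vp s" using st[OF x(2)] by auto
    then show "x \<in> VStates Vp" using st[OF x(2)] x(1) unfolding VStates_def by blast
  qed
  have JD: "Some (S0, H0) \<in> AvDom Vp" using S0V unfolding AvDom_def by blast
  have join: "av_join Vp K = Some (S0, H0)"
  proof (rule av_join_eqI[OF JD])
    show "\<forall>W\<in>K. av_le W (Some (S0, H0))"
    proof
      fix W assume "W \<in> K"
      then obtain l s h where W: "W = Some ({(l, Some (s, h |` addr_rng s))}, Map.graph (h |` (- addr_rng s)))"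
        and lsh: "(l, s, h) \<in> \<Sigma>" unfolding K_def by blast
      have "(l, Some (s, h |` addr_rng s)) \<in> S0" unfolding S0_def using lsh by blast
      moreover have "Map.graph (h |` (- addr_rng s)) \<subseteq> H0" unfolding H0_def using lsh by blast
      ultimately show "av_le W (Some (S0, H0))" unfolding W av_le_def by simp
    qed
    show "\<forall>U\<in>AvDom Vp. (\<forall>W\<in>K. av_le W U) \<longrightarrow> av_le (Some (S0, H0)) U"
    proof (intro ballI impI)
      fix U assume "U \<in> AvDom Vp" and ub: "\<forall>W\<in>K. av_le W U"
      show "av_le (Some (S0, H0)) U"
      proof (cases U)
        case None then show ?thesis by (simp add: av_le_def)
      next
        case (Some p)
        obtain S H where p: "p = (S, H)" by (cases p)
        have "\<forall>l s h. (l, s, h) \<in> \<Sigma> \<longrightarrow> (l, Some (s, h |` addr_rng s)) \<in> S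
              \<and> Map.graph (h |` (- addr_rng s)) \<subseteq> H"
        proof (intro allI impI)
          fix l s h assume "(l, s, h) \<in> \<Sigma>"
          then have "av_le (Some ({(l, Some (s, h |` addr_rng s))}, Map.graph (h |` (- addr_rng s)))) U"
            using ub unfolding K_def by blast
          then show "(l, Some (s, h |` addr_rng s)) \<in> S \<and> Map.graph (h |` (- addr_rng s)) \<subseteq> H"
            using Some p by (simp add: av_le_def)
        qed
        then show ?thesis using Some p unfolding av_le_def S0_def H0_def by auto
      qed
    qed
  qed
  have gam: "\<Sigma> \<subseteq> the (gamma_v Fp (Some (S0, H0)))"
  proof
    fix x assume x: "x \<in> \<Sigma>"
    obtain l s h where xe: "x = (l, s, h)" by (cases x)
    have lsh: "(l, s, h) \<in> \<Sigma>" using x xe by simp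
    have "h \<in> completion Fp H0 (h |` addr_rng s)"
      unfolding completion_def
    proof (intro CollectI conjI exI)
      show "safe_heap Fp h" using st[OF lsh] by blast
      show "dom (h |` addr_rng s) \<inter> dom (h |` (- addr_rng s)) = {}" by auto
      show "h = (h |` addr_rng s) ++ (h |` (- addr_rng s))" by (rule restrict_split)
      show "Map.graph (h |` (- addr_rng s)) \<subseteq> H0" unfolding H0_def using lsh by blast
    qed
    moreover have "(l, Some (s, h |` addr_rng s)) \<in> S0" unfolding S0_def using lsh by blast
    ultimately show "x \<in> the (gamma_v Fp (Some (S0, H0)))"
      unfolding gamma_v_def xe by auto
  qed
  have meet: "alpha_v Vp Fp (Some \<Sigma>) = Some (S0, H0)"
    unfolding alpha_v_def
  proof (rule av_meet_eqI[OF JD])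
    show "\<forall>W\<in>{V \<in> AvDom Vp. c_le (Some \<Sigma>) (gamma_v Fp V)}. av_le (Some (S0, H0)) W"
    proof
      fix W assume W: "W \<in> {V \<in> AvDom Vp. c_le (Some \<Sigma>) (gamma_v Fp V)}"
      show "av_le (Some (S0, H0)) W"
      proof (cases W)
        case None then show ?thesis by (simp add: av_le_def)
      next
        case (Some p)
        obtain S H where p: "p = (S, H)" by (cases p)
        have SV: "S \<subseteq> VStates Vp" using W Some p unfolding AvDom_def by auto
        have sub: "\<Sigma> \<subseteq> {(l, s, h'). \<exists>h. (l, Some (s, h)) \<in> S \<and> h' \<in> completion Fp H h}"
          using W Some p unfolding c_le_def gamma_v_def by auto
        have key: "(l, Some (s, h |` addr_rng s)) \<in> S \<and> Map.graph (h |` (- addr_rng s)) \<subseteq> H"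
          if lsh: "(l, s, h) \<in> \<Sigma>" for l s h
        proof -
          obtain h0 where h0: "(l, Some (s, h0)) \<in> S" "h \<in> completion Fp H h0"
            using sub lsh by blast
          have "dom h0 = ptr_img Vp s" using SV h0(1) unfolding VStates_def by blast
          then have dh: "dom h0 = addr_rng s" using st[OF lsh] by simp
          from completion_inv[OF h0(2)] dh h0(1) show ?thesis by simp
        qed
        then show ?thesis using Some p unfolding av_le_def S0_def H0_def by auto
      qed
    qed
    show "\<forall>U\<in>AvDom Vp. (\<forall>W\<in>{V \<in> AvDom Vp. c_le (Some \<Sigma>) (gamma_v Fp V)}. av_le U W)
            \<longrightarrow> av_le U (Some (S0, H0))"
    proof (intro ballI impI)
      fix U assume "\<forall>W\<in>{V \<in> AvDom Vp. c_le (Some \<Sigma>) (gamma_v Fp V)}. av_le U W"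
      moreover have "Some (S0, H0) \<in> {V \<in> AvDom Vp. c_le (Some \<Sigma>) (gamma_v Fp V)}"
        using JD gam unfolding c_le_def gamma_v_def by auto
      ultimately show "av_le U (Some (S0, H0))" by blast
    qed
  qed
  show "alpha_v Vp Fp (Some \<Sigma>) =
           av_join Vp {Some ({(l, Some (s, h |` addr_rng s))}, Map.graph (h |` (- addr_rng s)))
                        | l s h. (l, s, h) \<in> \<Sigma>}"
    using meet join unfolding K_def by simp
next
  have "{V \<in> AvDom Vp. c_le (None :: ('l, 'v, 'f, 'a) cstate set option) (gamma_v Fp V)}
        = {None}"
    apply (auto simp: AvDom_def c_le_def gamma_v_def split: option.splits prod.splits)
    by (metis option.exhaust surj_pair)
  note nn = this
  show "alpha_v Vp Fp (None :: ('l, 'v, 'f, 'a) cstate set option) = None"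
    unfolding alpha_v_def nn by (rule av_meet_eqI) (auto simp: AvDom_def av_le_def)
qed

end
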